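(* Let $n\ge 2$ and $k\ge 1$ be integers and put $t=\lceil n/(k+1)\rceil$. Let $A$ be the $(kt+1)\times n$ matrix with entries $A_{ij}=1$ if $i\le j\le \min(i+t-1,n)$ and $A_{ij}=0$ otherwise, for $1\le i\le kt+1$ and $1\le j\le n$. Then $A$ identifies all $k$-sparse vectors in $\mathbb{R}^n$. The support of every nonzero row of $A$ is a set of consecutive nodes, so $A$ is a feasible measurement matrix both for the line network $L_n$ and for the ring network $C_n$. Consequently $M^{L_n}_{k,n}\le k\lceil n/(k+1)\rceil+1$ and $M^{C_n}_{k,n}\le k\lceil n/(k+1)\rceil+1$.
   Context: Let $G=(V,E)$ be a simple undirected graph with $V=\{1,\dots,n\}$. A vector $x\in\mathbb{R}^n$ is associated with $G$, its $j$-th entry sitting at node $j$. A measurement matrix for $G$ is a matrix $A\in\{0,1\}^{m\times n}$ in which every nonzero row has a support $\{j: A_{ij}=1\}$ that induces a connected subgraph of $G$. A vector is $k$-sparse if it has at most $k$ nonzero entries. A matrix $A$ identifies all $k$-sparse vectors if $Ax_1\neq Ax_2$ for every two distinct $k$-sparse vectors $x_1,x_2$. $M^G_{k,n}$ is the minimum number of rows of a measurement matrix for $G$ that identifies all $k$-sparse vectors. The line network $L_n$ has edges $\{i,i+1\}$ for $1\le i\le n-1$. The ring network $C_n$ (with $n\ge 3$) additionally has the edge $\{n,1\}$. *)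

theory Defs
  imports Complex_Main
begin

text \<open>Graphs on the vertex set {1..n} are given by an edge relation on nat.
  Vectors in R^n are functions nat => real vanishing outside {1..n};
  an m x n matrix is a function nat => nat => real, only the entries with
  row index in {1..m} and column index in {1..n} being relevant.\<close>

definition line_graph :: "nat \<Rightarrow> nat \<Rightarrow> nat \<Rightarrow> bool" where
  "line_graph n i j \<longleftrightarrow> i \<in> {1..n} \<and> j \<in> {1..n} \<and> (j = i + 1 \<or> i = j + 1)"

definition ring_graph :: "nat \<Rightarrow> nat \<Rightarrow> nat \<Rightarrow> bool" where
  "ring_graph n i j \<longleftrightarrow> line_graph n i j \<or> (i = n \<and> j = 1) \<or> (i = 1 \<and> j = n)"

definition induces_connected :: "(nat \<Rightarrow> nat \<Rightarrow> bool) \<Rightarrow> nat set \<Rightarrow> bool" where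
  "induces_connected E S \<longleftrightarrow>
     (\<forall>u\<in>S. \<forall>v\<in>S. (\<lambda>x y. x \<in> S \<and> y \<in> S \<and> E x y)\<^sup>*\<^sup>* u v)"

definition row_support :: "nat \<Rightarrow> (nat \<Rightarrow> nat \<Rightarrow> real) \<Rightarrow> nat \<Rightarrow> nat set" where
  "row_support n A i = {j \<in> {1..n}. A i j = 1}"

definition measurement_matrix ::
  "(nat \<Rightarrow> nat \<Rightarrow> bool) \<Rightarrow> nat \<Rightarrow> nat \<Rightarrow> (nat \<Rightarrow> nat \<Rightarrow> real) \<Rightarrow> bool" where
  "measurement_matrix E n m A \<longleftrightarrow>
     (\<forall>i\<in>{1..m}. \<forall>j\<in>{1..n}. A i j = 0 \<or> A i j = 1) \<and>
     (\<forall>i\<in>{1..m}. row_support n A i \<noteq> {} \<longrightarrow> induces_connected E (row_support n A i))"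

definition rvec :: "nat \<Rightarrow> (nat \<Rightarrow> real) set" where
  "rvec n = {x. \<forall>j. j \<notin> {1..n} \<longrightarrow> x j = 0}"

definition sparse :: "nat \<Rightarrow> nat \<Rightarrow> (nat \<Rightarrow> real) \<Rightarrow> bool" where
  "sparse n k x \<longleftrightarrow> card {j \<in> {1..n}. x j \<noteq> 0} \<le> k"

definition mat_vec :: "nat \<Rightarrow> (nat \<Rightarrow> nat \<Rightarrow> real) \<Rightarrow> (nat \<Rightarrow> real) \<Rightarrow> nat \<Rightarrow> real" where
  "mat_vec n A x i = (\<Sum>j = 1..n. A i j * x j)"

definition identifies :: "nat \<Rightarrow> nat \<Rightarrow> nat \<Rightarrow> (nat \<Rightarrow> nat \<Rightarrow> real) \<Rightarrow> bool" where
  "identifies n m k A \<longleftrightarrow>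
     (\<forall>x1\<in>rvec n. \<forall>x2\<in>rvec n. sparse n k x1 \<longrightarrow> sparse n k x2 \<longrightarrow> x1 \<noteq> x2 \<longrightarrow>
        (\<exists>i\<in>{1..m}. mat_vec n A x1 i \<noteq> mat_vec n A x2 i))"

definition M_num :: "(nat \<Rightarrow> nat \<Rightarrow> bool) \<Rightarrow> nat \<Rightarrow> nat \<Rightarrow> nat" where
  "M_num E k n = (LEAST m. \<exists>A. measurement_matrix E n m A \<and> identifies n m k A)"

end

theory Submission
  imports Defs
begin

lemma t_facts:
  fixes n k t :: nat
  assumes "n \<ge> 2" and "t = nat \<lceil>real n / real (k + 1)\<rceil>"
  shows "t \<ge> 1" "n \<le> (k+1)*t"
proof -
  have pos: "real n / real (k+1) > 0" using assms(1) by simp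
  have c: "real n / real (k+1) \<le> of_int \<lceil>real n / real (k + 1)\<rceil>" by (rule le_of_int_ceiling)
  have cp: "\<lceil>real n / real (k + 1)\<rceil> \<ge> 1" using pos by (simp add: one_le_ceiling) 
  then have rt: "real t = of_int \<lceil>real n / real (k + 1)\<rceil>" using assms(2) by simp
  show "t \<ge> 1" using cp assms(2) by linarith
  have "real n \<le> of_int \<lceil>real n / real (k + 1)\<rceil> * real (k+1)"
    using c pos_divide_le_eq[of "real (k+1)" "real n" "of_int \<lceil>real n / real (k + 1)\<rceil>"] by linarith
  then have "real n \<le> real (k+1) * real t" using rt by (simp add: mult.commute del: of_nat_Suc)
  then show "n \<le> (k+1)*t" by (metis of_nat_le_iff of_nat_mult)
qed

lemma mv:
  fixes x :: "nat \<Rightarrow> real"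
  assumes "t \<ge> 1" "x \<in> rvec n"
  shows "mat_vec n (\<lambda>i j. if i \<le> j \<and> j \<le> min (i + t - 1) n then 1 else 0) x i = sum x {i..<i+t}"
proof -
  have "mat_vec n (\<lambda>i j. if i \<le> j \<and> j \<le> min (i + t - 1) n then 1 else 0) x i
      = (\<Sum>j=1..n. if j \<in> {i..<i+t} then x j else 0)"
    unfolding mat_vec_def by (rule sum.cong) (use assms(1) in auto)
  also have "\<dots> = sum x ({1..n} \<inter> {i..<i+t})" by (simp add: sum.inter_restrict)
  also have "\<dots> = sum x ({i..<i+t} \<inter> {1..n})" by (simp add: Int_commute)
  also have "\<dots> = (\<Sum>j\<in>{i..<i+t}. if j \<in> {1..n} then x j else 0)" by (simp add: sum.inter_restrict)
  also have "\<dots> = sum x {i..<i+t}" by (rule sum.cong) (use assms(2) in \<open>auto simp: rvec_def\<close>)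
  finally show ?thesis .
qed

lemma res_eq:
  fixes r r' a b t :: nat
  assumes "r \<in> {1..t}" "r' \<in> {1..t}" "r + a*t = r' + b*t"
  shows "r = r'"
proof -
  have "(r - 1 + a*t) = (r' - 1 + b*t)" using assms by auto
  then have "(r - 1 + a*t) mod t = (r' - 1 + b*t) mod t" by simp
  moreover have "(r - 1) mod t = r - 1" "(r' - 1) mod t = r' - 1" using assms by auto
  ultimately have "r - 1 = r' - 1" by simp
  then show ?thesis using assms by auto
qed

lemma ident:
  fixes n k t :: nat and A :: "nat \<Rightarrow> nat \<Rightarrow> real"
  assumes t1: "t \<ge> 1" and nle: "n \<le> (k+1)*t"
    and A: "A = (\<lambda>i j. if i \<le> j \<and> j \<le> min (i + t - 1) n then 1 else 0)"
  shows "identifies n (k * t + 1) k A"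
  unfolding identifies_def
proof (intro ballI impI)
  fix x1 x2 assume x1: "x1 \<in> rvec n" and x2: "x2 \<in> rvec n" and s1: "sparse n k x1"
    and s2: "sparse n k x2" and ne: "x1 \<noteq> x2"
  show "\<exists>i\<in>{1..k*t+1}. mat_vec n A x1 i \<noteq> mat_vec n A x2 i"
  proof (rule ccontr)
    assume "\<not> ?thesis"
    then have eq: "sum x1 {i..<i+t} = sum x2 {i..<i+t}" if "i \<in> {1..k*t+1}" for i
      using that mv[OF t1 x1] mv[OF t1 x2] A by auto
    define d where "d = (\<lambda>j. x1 j - x2 j)"
    have S0: "sum d {i..<i+t} = 0" if "i \<in> {1..k*t+1}" for i
      using eq[OF that] by (simp add: d_def sum_subtractf)
    have shift: "d i = d (i+t)" if "1 \<le> i" "i \<le> k*t" for i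
    proof -
      have a: "sum d {i..<i+t} = d i + sum d {Suc i..<i+t}" using t1 by (simp add: sum.atLeast_Suc_lessThan)
      have b: "sum d {Suc i..<Suc (i+t)} = sum d {Suc i..<i+t} + d (i+t)" using t1 by (simp add: sum.atLeastLessThan_Suc)
      have "sum d {i..<i+t} = 0" using S0 that by auto
      moreover have "sum d {Suc i..<Suc i+t} = 0" using S0[of "Suc i"] that by auto
      ultimately show ?thesis using a b by simp
    qed
    have per: "d (r + m*t) = d r" if "1 \<le> r" "r \<le> t" "m \<le> k" for r m
      using that
    proof (induction m)
      case 0 then show ?case by simp
    next
      case (Suc m)
      have "m*t + t \<le> k*t" using Suc.prems(3) mult_le_mono1[of "Suc m" k t] by simp
      then have "r + m*t \<le> k*t" using Suc.prems by linarith
      then have A1: "d (r + m*t) = d (r + m*t + t)" using shift[of "r+m*t"] Suc.prems by simp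
      have e: "r + Suc m * t = r + m*t + t" by simp
      have A2: "d (r + m*t) = d r" using Suc.IH Suc.prems by simp
      have "d (r + Suc m * t) = d (r + m * t + t)" by (rule arg_cong[where f=d, OF e])
      then show ?case using A1 A2 by argo
    qed
    have dout: "d j = 0" if "j \<notin> {1..n}" for j
      using x1 x2 that by (simp add: rvec_def d_def)
    obtain j where j: "j \<in> {1..n}" "d j \<noteq> 0"
    proof -
      obtain j where "x1 j \<noteq> x2 j" using ne by auto
      then have "d j \<noteq> 0" by (simp add: d_def)
      then show ?thesis using that dout by blast
    qed
    define r where "r = (j - 1) mod t + 1"
    define m where "m = (j - 1) div t"
    have j1: "1 \<le> j" using j(1) by simp
    have q: "(j - 1) div t * t + (j - 1) mod t = j - 1" by (rule div_mult_mod_eq)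
    have jr: "j = r + m*t" using q j1 unfolding r_def m_def by linarith
    have "(j - 1) mod t < t" using t1 by simp
    then have rin: "r \<in> {1..t}" unfolding r_def by simp
    have "j - 1 < (k+1)*t" using j(1) nle by auto
    then have "(j - 1) div t < k+1" by (rule less_mult_imp_div_less)
    then have mk: "m \<le> k" unfolding m_def by simp
    have "d (r + m*t) = d r" using per[of r m] rin mk by simp
    then have "d j = d r" using jr by simp
    then have dr: "d r \<noteq> 0" using j(2) by simp
    obtain r' where r': "r' \<in> {1..t}" "r' \<noteq> r" "d r' \<noteq> 0"
    proof (rule ccontr)
      assume "\<not> thesis"
      then have z: "\<forall>r'\<in>{1..t}-{r}. d r' = 0" using that by blast
      have "sum d {1..<1+t} = sum d {1..t}" by (rule sum.cong) auto
      also have "\<dots> = d r + sum d ({1..t}-{r})" using rin by (simp add: sum.remove)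
      also have "\<dots> = d r" using z by simp
      finally have "sum d {1..<1+t} = d r" .
      moreover have "sum d {1..<1+t} = 0" using S0[of 1] by simp
      ultimately show False using dr by simp
    qed
    define f where "f = (\<lambda>m. r + m*t)"
    define g where "g = (\<lambda>m. r' + m*t)"
    define P where "P = f ` {..k} \<union> g ` {..k}"
    have injf: "inj_on f {..k}" unfolding f_def inj_on_def using t1 by auto
    have injg: "inj_on g {..k}" unfolding g_def inj_on_def using t1 by auto
    have disj: "f ` {..k} \<inter> g ` {..k} = {}"
      unfolding f_def g_def using res_eq[OF rin r'(1)] r'(2) by auto
    have cardP: "card P = 2*(k+1)" unfolding P_def
      by (subst card_Un_disjoint) (use disj injf injg in \<open>auto simp: card_image\<close>)
    have sub: "P \<subseteq> {j\<in>{1..n}. x1 j \<noteq> 0} \<union> {j\<in>{1..n}. x2 j \<noteq> 0}"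
    proof
      fix p assume "p \<in> P"
      then have "d p \<noteq> 0" unfolding P_def f_def g_def using per rin r' dr by auto
      then show "p \<in> {j\<in>{1..n}. x1 j \<noteq> 0} \<union> {j\<in>{1..n}. x2 j \<noteq> 0}"
        using dout[of p] by (auto simp: d_def)
    qed
    have "card P \<le> card ({j\<in>{1..n}. x1 j \<noteq> 0} \<union> {j\<in>{1..n}. x2 j \<noteq> 0})"
      by (rule card_mono[OF _ sub]) auto
    also have "\<dots> \<le> card {j\<in>{1..n}. x1 j \<noteq> 0} + card {j\<in>{1..n}. x2 j \<noteq> 0}" by (rule card_Un_le)
    also have "\<dots> \<le> 2*k" using s1 s2 by (simp add: sparse_def)
    finally show False using cardP by simp
  qed
qed

lemma conn:
  fixes E :: "nat \<Rightarrow> nat \<Rightarrow> bool"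
  assumes E: "\<And>x. 1 \<le> x \<Longrightarrow> x+1 \<le> n \<Longrightarrow> E x (x+1) \<and> E (x+1) x"
    and ab: "1 \<le> a" "b \<le> n"
  shows "induces_connected E {a..b}"
proof -
  let ?R = "\<lambda>x y. x \<in> {a..b} \<and> y \<in> {a..b} \<and> E x y"
  have key: "?R\<^sup>*\<^sup>* u (u+d) \<and> ?R\<^sup>*\<^sup>* (u+d) u" if "u \<in> {a..b}" "u + d \<in> {a..b}" for u d
    using that
  proof (induction d)
    case 0 then show ?case by simp
  next
    case (Suc d)
    have IH: "?R\<^sup>*\<^sup>* u (u+d) \<and> ?R\<^sup>*\<^sup>* (u+d) u" using Suc by auto
    have e: "?R (u+d) (u+d+1)" "?R (u+d+1) (u+d)" using Suc.prems E[of "u+d"] ab by auto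
    have s: "u + Suc d = u + d + 1" by simp
    show ?case unfolding s
      using rtranclp.rtrancl_into_rtrancl[OF conjunct1[OF IH] e(1)]
        converse_rtranclp_into_rtranclp[OF e(2) conjunct2[OF IH]] by blast
  qed
  show ?thesis unfolding induces_connected_def
  proof (intro ballI)
    fix u v assume u: "u \<in> {a..b}" and v: "v \<in> {a..b}"
    show "?R\<^sup>*\<^sup>* u v"
    proof (cases "u \<le> v")
      case True then show ?thesis using key[of u "v-u"] u v by auto
    next
      case False then show ?thesis using key[of v "u-v"] u v by auto
    qed
  qed
qed

theorem theorem1:
  fixes n k t :: nat and A :: "nat \<Rightarrow> nat \<Rightarrow> real"
  assumes "n \<ge> 2" and "k \<ge> 1"
    and "t = nat \<lceil>real n / real (k + 1)\<rceil>"
    and "A = (\<lambda>i j. if i \<le> j \<and> j \<le> min (i + t - 1) n then 1 else 0)"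
  shows "identifies n (k * t + 1) k A
    \<and> (\<forall>i\<in>{1..k * t + 1}. \<exists>a b. row_support n A i = {a..b})
    \<and> measurement_matrix (line_graph n) n (k * t + 1) A
    \<and> (n \<ge> 3 \<longrightarrow> measurement_matrix (ring_graph n) n (k * t + 1) A)
    \<and> M_num (line_graph n) k n \<le> k * t + 1
    \<and> (n \<ge> 3 \<longrightarrow> M_num (ring_graph n) k n \<le> k * t + 1)"
proof -
  note tf = t_facts[OF assms(1) assms(3)]
  have id: "identifies n (k * t + 1) k A" using ident[OF tf assms(4)] .
  have rs: "row_support n A i = {i..min (i+t-1) n}" if "i \<ge> 1" for i
    using that assms(4) by (auto simp: row_support_def)
  have mm: "measurement_matrix E n (k * t + 1) A"
    if E: "\<And>x. 1 \<le> x \<Longrightarrow> x+1 \<le> n \<Longrightarrow> E x (x+1) \<and> E (x+1) x" for E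
    unfolding measurement_matrix_def
  proof (intro conjI ballI impI)
    fix i j show "A i j = 0 \<or> A i j = 1" using assms(4) by auto
  next
    fix i assume i: "i \<in> {1..k*t+1}"
    then have i1: "1 \<le> i" by simp
    have "induces_connected E {i..min (i+t-1) n}"
      by (rule conn[of n E]) (use i1 E in auto)
    then show "induces_connected E (row_support n A i)" using rs[OF i1] by simp
  qed
  have ml: "measurement_matrix (line_graph n) n (k * t + 1) A"
    by (rule mm) (auto simp: line_graph_def)
  have mr: "measurement_matrix (ring_graph n) n (k * t + 1) A"
    by (rule mm) (auto simp: ring_graph_def line_graph_def)
  have Ml: "M_num (line_graph n) k n \<le> k * t + 1"
    unfolding M_num_def by (rule Least_le) (use ml id in blast)
  have Mr: "M_num (ring_graph n) k n \<le> k * t + 1"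
    unfolding M_num_def by (rule Least_le) (use mr id in blast)
  have rs2: "\<forall>i\<in>{1..k * t + 1}. \<exists>a b. row_support n A i = {a..b}"
  proof
    fix i assume "i \<in> {1..k * t + 1}"
    then have "row_support n A i = {i..min (i+t-1) n}" using rs by simp
    then show "\<exists>a b. row_support n A i = {a..b}" by blast
  qed
  show ?thesis using id rs2 ml mr Ml Mr by (intro conjI impI) assumption+
qed

end
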